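(* Let $S$ be a memory system satisfying the Causality assumption, let $n,m,v\ge1$, and let $\Omega$ be a witness for $S(n,m,v)$. For every unambiguous trace $\tau$ of $S(n,m,v)$ and every location $1\le i\le m$, the relation $\Omega^e(\tau,i)$ is a (strict) partial order on $L(\tau,i)$, i.e. it is irreflexive, antisymmetric and transitive.
   Context: Notation: $\mathbb{N}_n=\{1,\dots,n\}$, $\mathbb{W}_n=\{0,\dots,n\}$. Memory events $E(n,m,v)=\{R,W\}\times\mathbb{N}_n\times\mathbb{N}_m\times\mathbb{W}_v$; for $e=\langle a,b,c,d\rangle$, $op(e)=a$, $proc(e)=b$, $loc(e)=c$, $data(e)=d$; $0$ models the initial value of every location. A memory system is a family $S=(S(n,m,v))_{n,m,v\ge1}$, $S(n,m,v)$ a regular set of finite runs over an alphabet $E^a(n,m,v)\supseteq E(n,m,v)$ (other letters are internal events). The trace of a run is its subsequence of memory events; traces of $S(n,m,v)$ are traces of its runs. For a sequence $\tau$ of memory events: $L(\tau,j)=\{k: loc(\tau(k))=j\}$, $L^w(\tau,j)=\{k\in L(\tau,j): op(\tau(k))=W\}$, $L^r(\tau,j)=\{k\in L(\tau,j): op(\tau(k))=R\}$. A trace $\tau$ is unambiguous if for every location $j$ and $x\in L^w(\tau,j)$, $data(\tau(x))\ne0$ and $data(\tau(x))\ne data(\tau(y))$ for all $y\in L^w(\tau,j)\setminus\{x\}$. Causality assumption: for all $n,m,v\ge1$, every trace $\tau$ of $S(n,m,v)$, every location $j$ and every $x\in L^r(\tau,j)$, either $data(\tau(x))=0$ or there is $y\in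 L^w(\tau,j)$ with $data(\tau(x))=data(\tau(y))$. A witness $\Omega$ for $S(n,m,v)$ assigns to every trace $\tau$ of $S(n,m,v)$ and location $j$ a strict total order $\Omega(\tau,j)$ on $L^w(\tau,j)$. For an unambiguous trace $\tau$, the relation $\Omega^e(\tau,j)\subseteq L(\tau,j)\times L(\tau,j)$ is defined by: $\langle x,y\rangle\in\Omega^e(\tau,j)$ iff (1) $data(\tau(x))=data(\tau(y))$, $op(\tau(x))=W$ and $op(\tau(y))=R$; or (2) $data(\tau(x))=0$ and $data(\tau(y))\ne0$; or (3) there are $a,b\in L^w(\tau,j)$ with $\langle a,b\rangle\in\Omega(\tau,j)$, $data(\tau(a))=data(\tau(x))$ and $data(\tau(b))=data(\tau(y))$. *)

theory Defs
  imports Main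
begin

datatype mop = R | W

type_synonym event = "mop \<times> nat \<times> nat \<times> nat"

definition opr :: "event \<Rightarrow> mop" where "opr e = fst e"
definition proc :: "event \<Rightarrow> nat" where "proc e = fst (snd e)"
definition loc :: "event \<Rightarrow> nat" where "loc e = fst (snd (snd e))"
definition dat :: "event \<Rightarrow> nat" where "dat e = snd (snd (snd e))"

definition Ev :: "nat \<Rightarrow> nat \<Rightarrow> nat \<Rightarrow> event set" where
  "Ev n m v = UNIV \<times> {1..n} \<times> {1..m} \<times> {0..v}"

datatype 'i letter = Mem event | Internal 'i

definition alphabet :: "event set \<Rightarrow> 'i set \<Rightarrow> 'i letter set" where
  "alphabet E I = Mem ` E \<union> Internal ` I"

definition regular_over :: "'a set \<Rightarrow> 'a list set \<Rightarrow> bool" where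
  "regular_over A L \<longleftrightarrow>
     (\<exists>(Q :: nat set) q0 (\<delta> :: nat \<Rightarrow> 'a \<Rightarrow> nat) F.
        finite Q \<and> q0 \<in> Q \<and> F \<subseteq> Q \<and> (\<forall>q\<in>Q. \<forall>a\<in>A. \<delta> q a \<in> Q) \<and>
        L = {w \<in> lists A. foldl \<delta> q0 w \<in> F})"

definition memory_system :: "(nat \<Rightarrow> nat \<Rightarrow> nat \<Rightarrow> 'i letter list set) \<Rightarrow> (nat \<Rightarrow> nat \<Rightarrow> nat \<Rightarrow> 'i set) \<Rightarrow> bool" where
  "memory_system S I \<longleftrightarrow>
     (\<forall>n m v. n \<ge> 1 \<longrightarrow> m \<ge> 1 \<longrightarrow> v \<ge> 1 \<longrightarrow>
        finite (I n m v) \<and> regular_over (alphabet (Ev n m v) (I n m v)) (S n m v))"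

fun trace :: "'i letter list \<Rightarrow> event list" where
  "trace [] = []"
| "trace (Mem e # r) = e # trace r"
| "trace (Internal _ # r) = trace r"

definition traces :: "'i letter list set \<Rightarrow> event list set" where
  "traces T = trace ` T"

text \<open>Positions are 0-based list indices.\<close>
definition Lpos :: "event list \<Rightarrow> nat \<Rightarrow> nat set" where
  "Lpos \<tau> j = {k. k < length \<tau> \<and> loc (\<tau> ! k) = j}"
definition Lw :: "event list \<Rightarrow> nat \<Rightarrow> nat set" where
  "Lw \<tau> j = {k \<in> Lpos \<tau> j. opr (\<tau> ! k) = W}"
definition Lr :: "event list \<Rightarrow> nat \<Rightarrow> nat set" where
  "Lr \<tau> j = {k \<in> Lpos \<tau> j. opr (\<tau> ! k) = R}"

definition unambiguous :: "event list \<Rightarrow> bool" where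
  "unambiguous \<tau> \<longleftrightarrow>
     (\<forall>j. \<forall>x\<in>Lw \<tau> j. dat (\<tau> ! x) \<noteq> 0 \<and>
        (\<forall>y\<in>Lw \<tau> j - {x}. dat (\<tau> ! x) \<noteq> dat (\<tau> ! y)))"

definition causality :: "(nat \<Rightarrow> nat \<Rightarrow> nat \<Rightarrow> 'i letter list set) \<Rightarrow> bool" where
  "causality S \<longleftrightarrow>
     (\<forall>n m v. n \<ge> 1 \<longrightarrow> m \<ge> 1 \<longrightarrow> v \<ge> 1 \<longrightarrow>
        (\<forall>\<tau>\<in>traces (S n m v). \<forall>j. \<forall>x\<in>Lr \<tau> j.
           dat (\<tau> ! x) = 0 \<or> (\<exists>y\<in>Lw \<tau> j. dat (\<tau> ! x) = dat (\<tau> ! y))))"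

definition strict_total_order_on :: "'a set \<Rightarrow> ('a \<times> 'a) set \<Rightarrow> bool" where
  "strict_total_order_on A r \<longleftrightarrow>
     r \<subseteq> A \<times> A \<and> irrefl r \<and> trans r \<and> total_on A r"

definition witness :: "(nat \<Rightarrow> nat \<Rightarrow> nat \<Rightarrow> 'i letter list set) \<Rightarrow> nat \<Rightarrow> nat \<Rightarrow> nat
     \<Rightarrow> (event list \<Rightarrow> nat \<Rightarrow> (nat \<times> nat) set) \<Rightarrow> bool" where
  "witness S n m v \<Omega> \<longleftrightarrow>
     (\<forall>\<tau>\<in>traces (S n m v). \<forall>j\<in>{1..m}. strict_total_order_on (Lw \<tau> j) (\<Omega> \<tau> j))"

definition Omega_e :: "(event list \<Rightarrow> nat \<Rightarrow> (nat \<times> nat) set) \<Rightarrow> event list \<Rightarrow> nat \<Rightarrow> (nat \<times> nat) set" where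
  "Omega_e \<Omega> \<tau> j = {(x, y). x \<in> Lpos \<tau> j \<and> y \<in> Lpos \<tau> j \<and>
     ((dat (\<tau> ! x) = dat (\<tau> ! y) \<and> opr (\<tau> ! x) = W \<and> opr (\<tau> ! y) = R)
      \<or> (dat (\<tau> ! x) = 0 \<and> dat (\<tau> ! y) \<noteq> 0)
      \<or> (\<exists>a b. a \<in> Lw \<tau> j \<and> b \<in> Lw \<tau> j \<and> (a, b) \<in> \<Omega> \<tau> j \<and>
              dat (\<tau> ! a) = dat (\<tau> ! x) \<and> dat (\<tau> ! b) = dat (\<tau> ! y)))}"

end

theory Submission
  imports Defs
begin


lemma core_antisym:
  fixes O' :: "(nat\<times>nat) set" and d :: "nat \<Rightarrow> nat" and op :: "nat \<Rightarrow> mop"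
  assumes irr: "\<And>a. (a,a) \<notin> O'" and tr: "\<And>a b c. (a,b) \<in> O' \<Longrightarrow> (b,c) \<in> O' \<Longrightarrow> (a,c) \<in> O'"
  and nz: "\<And>p. p \<in> Lw' \<Longrightarrow> d p \<noteq> 0"
  and un: "\<And>p q. p \<in> Lw' \<Longrightarrow> q \<in> Lw' \<Longrightarrow> d p = d q \<Longrightarrow> p = q"
  and h1: "d x = d y \<and> op x = W \<and> op y = R \<or> d x = 0 \<and> d y \<noteq> 0 \<or>
         (\<exists>a. a \<in> Lw' \<and> (\<exists>b. b \<in> Lw' \<and> (a, b) \<in> O' \<and> d a = d x \<and> d b = d y))"
  and h2: "d y = d x \<and> op y = W \<and> op x = R \<or> d y = 0 \<and> d x \<noteq> 0 \<or>
         (\<exists>a. a \<in> Lw' \<and> (\<exists>b. b \<in> Lw' \<and> (a, b) \<in> O' \<and> d a = d y \<and> d b = d x))"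
  shows "x = y"
  using h1 h2 apply (elim disjE exE conjE)
  apply simp_all
  apply (metis irr un)
  apply (metis irr un)
  apply (metis nz)
  apply (metis nz)
  apply (metis irr un tr)
  done

lemma core_trans:
  fixes O' :: "(nat\<times>nat) set" and d :: "nat \<Rightarrow> nat" and op :: "nat \<Rightarrow> mop"
  assumes irr: "\<And>a. (a,a) \<notin> O'" and tr: "\<And>a b c. (a,b) \<in> O' \<Longrightarrow> (b,c) \<in> O' \<Longrightarrow> (a,c) \<in> O'"
  and nz: "\<And>p. p \<in> Lw' \<Longrightarrow> d p \<noteq> 0"
  and un: "\<And>p q. p \<in> Lw' \<Longrightarrow> q \<in> Lw' \<Longrightarrow> d p = d q \<Longrightarrow> p = q"
  and wl: "\<And>p. p \<in> L \<Longrightarrow> op p = W \<Longrightarrow> p \<in> Lw'"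
  and x: "x \<in> L"
  and h1: "d x = d y \<and> op x = W \<and> op y = R \<or> d x = 0 \<and> d y \<noteq> 0 \<or>
         (\<exists>a. a \<in> Lw' \<and> (\<exists>b. b \<in> Lw' \<and> (a, b) \<in> O' \<and> d a = d x \<and> d b = d y))"
  and h2: "d y = d z \<and> op y = W \<and> op z = R \<or> d y = 0 \<and> d z \<noteq> 0 \<or>
         (\<exists>a. a \<in> Lw' \<and> (\<exists>b. b \<in> Lw' \<and> (a, b) \<in> O' \<and> d a = d y \<and> d b = d z))"
  shows "d x = d z \<and> op x = W \<and> op z = R \<or> d x = 0 \<and> d z \<noteq> 0 \<or>
         (\<exists>a. a \<in> Lw' \<and> (\<exists>b. b \<in> Lw' \<and> (a, b) \<in> O' \<and> d a = d x \<and> d b = d z))"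
  using h1 h2 apply (elim disjE exE conjE)
  apply simp_all
  apply blast
  apply blast
  apply (metis nz gr0I)
  apply (metis nz)
  apply (metis un tr)
  done

theorem lemma5p2:
  fixes S :: "nat \<Rightarrow> nat \<Rightarrow> nat \<Rightarrow> 'i letter list set"
    and I :: "nat \<Rightarrow> nat \<Rightarrow> nat \<Rightarrow> 'i set"
    and \<Omega> :: "event list \<Rightarrow> nat \<Rightarrow> (nat \<times> nat) set"
  assumes "memory_system S I"
    and "causality S"
    and "n \<ge> 1" and "m \<ge> 1" and "v \<ge> 1"
    and "witness S n m v \<Omega>"
    and "\<tau> \<in> traces (S n m v)"
    and "unambiguous \<tau>"
    and "i \<in> {1..m}"
  shows "irrefl_on (Lpos \<tau> i) (Omega_e \<Omega> \<tau> i) \<and> antisym (Omega_e \<Omega> \<tau> i)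
         \<and> trans (Omega_e \<Omega> \<tau> i)"
proof -
  have so: "strict_total_order_on (Lw \<tau> i) (\<Omega> \<tau> i)"
    using assms(6,7,9) unfolding witness_def by blast
  have irr: "(a, a) \<notin> \<Omega> \<tau> i" for a using so unfolding strict_total_order_on_def irrefl_def by blast
  have tr: "(a, b) \<in> \<Omega> \<tau> i \<Longrightarrow> (b, c) \<in> \<Omega> \<tau> i \<Longrightarrow> (a, c) \<in> \<Omega> \<tau> i" for a b c
    using so unfolding strict_total_order_on_def trans_def by blast
  have nz: "p \<in> Lw \<tau> i \<Longrightarrow> dat (\<tau> ! p) \<noteq> 0" for p
    using assms(8) unfolding unambiguous_def by blast
  have un: "p \<in> Lw \<tau> i \<Longrightarrow> q \<in> Lw \<tau> i \<Longrightarrow> dat (\<tau> ! p) = dat (\<tau> ! q) \<Longrightarrow> p = q" for p q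
    using assms(8) unfolding unambiguous_def by blast
  have wl: "p \<in> Lpos \<tau> i \<Longrightarrow> opr (\<tau> ! p) = W \<Longrightarrow> p \<in> Lw \<tau> i" for p
    unfolding Lw_def by blast
  have A: "irrefl_on (Lpos \<tau> i) (Omega_e \<Omega> \<tau> i)"
    unfolding irrefl_on_def Omega_e_def using irr un by (auto, metis)
  have B: "antisym (Omega_e \<Omega> \<tau> i)"
  proof (rule antisymI)
    fix x y
    assume "(x, y) \<in> Omega_e \<Omega> \<tau> i" "(y, x) \<in> Omega_e \<Omega> \<tau> i"
    then have h1: "dat (\<tau> ! x) = dat (\<tau> ! y) \<and> opr (\<tau> ! x) = W \<and> opr (\<tau> ! y) = R \<or>
         dat (\<tau> ! x) = 0 \<and> dat (\<tau> ! y) \<noteq> 0 \<or>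
         (\<exists>a. a \<in> Lw \<tau> i \<and> (\<exists>b. b \<in> Lw \<tau> i \<and> (a, b) \<in> \<Omega> \<tau> i \<and> dat (\<tau> ! a) = dat (\<tau> ! x) \<and> dat (\<tau> ! b) = dat (\<tau> ! y)))"
      and h2: "dat (\<tau> ! y) = dat (\<tau> ! x) \<and> opr (\<tau> ! y) = W \<and> opr (\<tau> ! x) = R \<or>
         dat (\<tau> ! y) = 0 \<and> dat (\<tau> ! x) \<noteq> 0 \<or>
         (\<exists>a. a \<in> Lw \<tau> i \<and> (\<exists>b. b \<in> Lw \<tau> i \<and> (a, b) \<in> \<Omega> \<tau> i \<and> dat (\<tau> ! a) = dat (\<tau> ! y) \<and> dat (\<tau> ! b) = dat (\<tau> ! x)))"
      unfolding Omega_e_def by blast+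
    show "x = y"
      by (rule core_antisym[where d="\<lambda>p. dat (\<tau> ! p)" and op="\<lambda>p. opr (\<tau> ! p)", OF irr tr nz un h1 h2])
  qed
  have C: "trans (Omega_e \<Omega> \<tau> i)"
  proof (rule transI)
    fix x y z
    assume xy: "(x, y) \<in> Omega_e \<Omega> \<tau> i" and yz: "(y, z) \<in> Omega_e \<Omega> \<tau> i"
    then have x: "x \<in> Lpos \<tau> i" and z: "z \<in> Lpos \<tau> i" unfolding Omega_e_def by blast+
    have h1: "dat (\<tau> ! x) = dat (\<tau> ! y) \<and> opr (\<tau> ! x) = W \<and> opr (\<tau> ! y) = R \<or>
         dat (\<tau> ! x) = 0 \<and> dat (\<tau> ! y) \<noteq> 0 \<or>
         (\<exists>a. a \<in> Lw \<tau> i \<and> (\<exists>b. b \<in> Lw \<tau> i \<and> (a, b) \<in> \<Omega> \<tau> i \<and> dat (\<tau> ! a) = dat (\<tau> ! x) \<and> dat (\<tau> ! b) = dat (\<tau> ! y)))"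
      using xy unfolding Omega_e_def by blast
    have h2: "dat (\<tau> ! y) = dat (\<tau> ! z) \<and> opr (\<tau> ! y) = W \<and> opr (\<tau> ! z) = R \<or>
         dat (\<tau> ! y) = 0 \<and> dat (\<tau> ! z) \<noteq> 0 \<or>
         (\<exists>a. a \<in> Lw \<tau> i \<and> (\<exists>b. b \<in> Lw \<tau> i \<and> (a, b) \<in> \<Omega> \<tau> i \<and> dat (\<tau> ! a) = dat (\<tau> ! y) \<and> dat (\<tau> ! b) = dat (\<tau> ! z)))"
      using yz unfolding Omega_e_def by blast
    have "dat (\<tau> ! x) = dat (\<tau> ! z) \<and> opr (\<tau> ! x) = W \<and> opr (\<tau> ! z) = R \<or>
         dat (\<tau> ! x) = 0 \<and> dat (\<tau> ! z) \<noteq> 0 \<or>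
         (\<exists>a. a \<in> Lw \<tau> i \<and> (\<exists>b. b \<in> Lw \<tau> i \<and> (a, b) \<in> \<Omega> \<tau> i \<and> dat (\<tau> ! a) = dat (\<tau> ! x) \<and> dat (\<tau> ! b) = dat (\<tau> ! z)))"
      by (rule core_trans[where d="\<lambda>p. dat (\<tau> ! p)" and op="\<lambda>p. opr (\<tau> ! p)", OF irr tr nz un wl x h1 h2])
    then show "(x, z) \<in> Omega_e \<Omega> \<tau> i" using x z unfolding Omega_e_def by blast
  qed
  show ?thesis using A B C by blast
qed

end
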